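(* Let $\Delta x>0$, grid $x_j=x_1+(j-1)\Delta x$, $M_-,M_+\in\mathbb{Z}$ with $M:=M_-+M_+\ge0$, and let $f,h$ be real functions of class $C^{N_{TJ}+2}$ forming a reconstruction pair, $f(x)=\frac{1}{\Delta x}\int_{x-\frac12\Delta x}^{x+\frac12\Delta x}h(\zeta)\,d\zeta$, on an interval containing the relevant points. For each grid index $j$, let $p_{f,j}$ be the polynomial of degree $\le M$ interpolating $f$ at $x_{j-M_-},\dots,x_{j+M_+}$, let $p_{h,j}$ be the polynomial of degree $\le M$ with $p_{f,j}(x)=\frac1{\Delta x}\int_{x-\frac12\Delta x}^{x+\frac12\Delta x}p_{h,j}$ for all $x$, and let $\hat h_{j,j+\frac12}:=p_{h,j}(x_j+\tfrac12\Delta x)$. Then for $N_{TJ}\ge M+1$, $$\frac{\hat h_{i,i+\frac12}-\hat h_{i-1,i-\frac12}}{\Delta x}=f'(x_i)+\sum_{n=M+1}^{N_{TJ}}\Lambda_{M_-,M_+,n}\Delta x^n f^{(n+1)}(x_i)+O(\Delta x^{N_{TJ}+1})=f'(x_i)+O(\Delta x^{M+1}),$$ where $\Lambda_{M_-,M_+,n}=\sum_{\ell=0}^{n-M-1}\frac{(-1)^\ell}{(\ell+1)!}\mu_{h,M_-,M_+,n-\ell}(\tfrac12)$.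
   Context: $O(\cdot)$ refers to $\Delta x\to0^+$. $V_{M_-,M_+}$ is the Vandermonde matrix with entries $(i-1-M_-)^{j-1}$, $1\le i,j\le M+1$ (with $0^0=1$); $\nu_{M_-,M_+,m,k}:=\sum_{\ell=-M_-}^{M_+}(V_{M_-,M_+}^{-1})_{m+1,\ell+M_-+1}\ell^k$; $\tau_0=1$, $\tau_{2k}=\sum_{s=0}^{k-1}\frac{-\tau_{2s}}{2^{2k-2s}(2k-2s+1)!}$ for $k>0$; $\mu_{h,M_-,M_+,s}(\xi)=\sum_{k=0}^{\lfloor s/2\rfloor}\frac{-\tau_{2k}}{(s-2k)!}\xi^{s-2k}+\sum_{m=0}^{M}\Big(\sum_{k=0}^{\lfloor (M-m)/2\rfloor}\tau_{2k}\nu_{M_-,M_+,m+2k,s}\frac{(m+2k)!}{s!\,m!}\Big)\xi^m$. *)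

theory Defs
  imports "HOL-Analysis.Analysis" "HOL-Library.Landau_Symbols"
    "HOL-Computational_Algebra.Polynomial" "Jordan_Normal_Form.Matrix"
begin

definition Ck_on :: "nat \<Rightarrow> (real \<Rightarrow> real) \<Rightarrow> real set \<Rightarrow> bool" where
  "Ck_on k f U \<longleftrightarrow> (\<forall>m<k. \<forall>y\<in>U. ((deriv ^^ m) f) field_differentiable (at y))
                    \<and> continuous_on U ((deriv ^^ k) f)"

text \<open>Vandermonde matrix V_{M-,M+} (0-indexed): entry (i,j) is (i - M_-)^j, with 0^0 = 1.\<close>
definition vandermonde :: "int \<Rightarrow> int \<Rightarrow> real mat" where
  "vandermonde Mm Mp = mat (nat (Mm + Mp) + 1) (nat (Mm + Mp) + 1)
      (\<lambda>(i, j). (real_of_int (int i - Mm)) ^ j)"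

definition vandermonde_inv :: "int \<Rightarrow> int \<Rightarrow> real mat" where
  "vandermonde_inv Mm Mp = (THE B. B \<in> carrier_mat (nat (Mm + Mp) + 1) (nat (Mm + Mp) + 1)
      \<and> B * vandermonde Mm Mp = 1\<^sub>m (nat (Mm + Mp) + 1)
      \<and> vandermonde Mm Mp * B = 1\<^sub>m (nat (Mm + Mp) + 1))"

text \<open>nu_{M-,M+,m,k} = sum_{l=-M-}^{M+} (V^{-1})_{m+1, l+M-+1} l^k (here 0-indexed).\<close>
definition nu :: "int \<Rightarrow> int \<Rightarrow> nat \<Rightarrow> nat \<Rightarrow> real" where
  "nu Mm Mp m k = (\<Sum>l\<in>{-Mm..Mp}. vandermonde_inv Mm Mp $$ (m, nat (l + Mm)) * (real_of_int l) ^ k)"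

text \<open>tau k denotes tau_{2k}: tau_0 = 1, tau_{2k} = sum_{s<k} -tau_{2s}/(2^{2k-2s} (2k-2s+1)!).\<close>
fun tau :: "nat \<Rightarrow> real" where
  "tau 0 = 1"
| "tau (Suc k) = (\<Sum>s<Suc k. - tau s / (2 ^ (2 * Suc k - 2 * s) * fact (2 * Suc k - 2 * s + 1)))"

definition mu :: "int \<Rightarrow> int \<Rightarrow> nat \<Rightarrow> real \<Rightarrow> real" where
  "mu Mm Mp s \<xi> =
     (\<Sum>k\<le>s div 2. - tau k / fact (s - 2 * k) * \<xi> ^ (s - 2 * k))
   + (\<Sum>m\<le>nat (Mm + Mp).
        (\<Sum>k\<le>(nat (Mm + Mp) - m) div 2.
           tau k * nu Mm Mp (m + 2 * k) s * fact (m + 2 * k) / (fact s * fact m)) * \<xi> ^ m)"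

definition Lambda :: "int \<Rightarrow> int \<Rightarrow> nat \<Rightarrow> real" where
  "Lambda Mm Mp n = (\<Sum>l\<le>n - nat (Mm + Mp) - 1. (-1) ^ l / fact (l + 1) * mu Mm Mp (n - l) (1 / 2))"

definition pf :: "(real \<Rightarrow> real) \<Rightarrow> int \<Rightarrow> int \<Rightarrow> real \<Rightarrow> real \<Rightarrow> real poly" where
  "pf f Mm Mp dx c = (THE p. degree p \<le> nat (Mm + Mp) \<and>
      (\<forall>k\<in>{-Mm..Mp}. poly p (c + real_of_int k * dx) = f (c + real_of_int k * dx)))"

definition ph :: "int \<Rightarrow> int \<Rightarrow> real \<Rightarrow> real poly \<Rightarrow> real poly" where
  "ph Mm Mp dx p = (THE q. degree q \<le> nat (Mm + Mp) \<and>
      (\<forall>y. poly p y = 1 / dx * integral {y - dx / 2 .. y + dx / 2} (poly q)))"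

definition hhat :: "(real \<Rightarrow> real) \<Rightarrow> int \<Rightarrow> int \<Rightarrow> real \<Rightarrow> real \<Rightarrow> real" where
  "hhat f Mm Mp dx c = poly (ph Mm Mp dx (pf f Mm Mp dx c)) (c + dx / 2)"

end

theory Submission imports Defs "HOL-Computational_Algebra.Formal_Power_Series" "Jordan_Normal_Form.Determinant" begin

lemma poly_eq_on_points:
  fixes p q :: "real poly"
  assumes "degree p \<le> n" "degree q \<le> n" "inj_on g A" "card A = Suc n" "finite A"
    and "\<forall>a\<in>A. poly p (g a) = poly q (g a)"
  shows "p = q"
proof (rule ccontr)
  assume ne: "p \<noteq> q"
  hence ne': "p - q \<noteq> 0" by simp
  have "g ` A \<subseteq> {x. poly (p - q) x = 0}" using assms(6) by auto
  moreover have "finite {x. poly (p - q) x = 0}" using poly_roots_finite[OF ne'] .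
  ultimately have "card (g ` A) \<le> card {x. poly (p - q) x = 0}" by (rule card_mono[rotated])
  also have "\<dots> \<le> degree (p - q)" by (rule card_poly_roots_bound[OF ne'])
  also have "\<dots> \<le> n" using assms(1,2) degree_diff_le by blast
  finally show False using card_image[OF assms(3)] assms(4) by simp
qed

definition kk :: "int \<Rightarrow> nat \<Rightarrow> real" where "kk Mm i = real_of_int (int i - Mm)"

lemma inj_kk_aff: "dx \<noteq> 0 \<Longrightarrow> inj_on (\<lambda>i. c + kk Mm i * dx) {..n}"
  by (auto simp: inj_on_def kk_def)

lemma poly_eq_on_stencil:
  fixes p q :: "real poly"
  assumes "degree p \<le> n" "degree q \<le> n" "dx \<noteq> 0"
    and "\<forall>i\<le>n. poly p (c + kk Mm i * dx) = poly q (c + kk Mm i * dx)"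
  shows "p = q"
  using poly_eq_on_points[OF assms(1,2) inj_kk_aff[OF assms(3)]] assms(4) by auto

lemma vandermonde_carrier: "vandermonde Mm Mp \<in> carrier_mat (nat (Mm+Mp)+1) (nat (Mm+Mp)+1)"
  by (simp add: vandermonde_def)

lemma vandermonde_index: "i \<le> nat (Mm+Mp) \<Longrightarrow> j \<le> nat (Mm+Mp) \<Longrightarrow> vandermonde Mm Mp $$ (i,j) = kk Mm i ^ j"
  by (simp add: vandermonde_def kk_def)

lemma vandermonde_det: "det (vandermonde Mm Mp) \<noteq> 0"
proof
  let ?n = "nat (Mm+Mp)"
  assume "det (vandermonde Mm Mp) = 0"
  then obtain v where v: "v \<in> carrier_vec (?n+1)" "v \<noteq> 0\<^sub>v (?n+1)" "vandermonde Mm Mp *\<^sub>v v = 0\<^sub>v (?n+1)"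
    using det_0_iff_vec_prod_zero_field[OF vandermonde_carrier] by blast
  define p where "p = (\<Sum>j\<le>?n. monom (v $ j) j)"
  have dp: "degree p \<le> ?n" unfolding p_def
    by (rule degree_sum_le) (auto intro: order.trans[OF degree_monom_le])
  have ev: "poly p (0 + kk Mm i * 1) = poly 0 (0 + kk Mm i * 1)" if "i \<le> ?n" for i
  proof -
    have "(vandermonde Mm Mp *\<^sub>v v) $ i = 0" using v(3) that by simp
    moreover have "(vandermonde Mm Mp *\<^sub>v v) $ i = (\<Sum>j = 0..<?n+1. kk Mm i ^ j * v $ j)"
      using that v(1) by (simp add: mult_mat_vec_def scalar_prod_def vandermonde_index vandermonde_def kk_def)
    moreover have "poly p (kk Mm i) = (\<Sum>j\<le>?n. v $ j * kk Mm i ^ j)"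
      by (simp add: p_def poly_sum poly_monom)
    moreover have "(\<Sum>j = 0..<?n+1. kk Mm i ^ j * v $ j) = (\<Sum>j\<le>?n. v $ j * kk Mm i ^ j)"
      by (rule sum.cong) (auto simp: mult.commute)
    ultimately show ?thesis by simp
  qed
  have "p = 0" using poly_eq_on_stencil[OF dp, where q=0 and dx=1 and c=0 and Mm=Mm] ev by simp
  hence "v $ j = 0" if "j \<le> ?n" for j
  proof -
    have "coeff p j = (\<Sum>k\<le>?n. coeff (monom (v $ k) k) j)" by (simp add: p_def coeff_sum)
    also have "\<dots> = v $ j" using that by (simp add: coeff_monom)
    finally show ?thesis using \<open>p = 0\<close> by simp
  qed
  hence "v = 0\<^sub>v (?n+1)" using v(1) by (intro eq_vecI) auto
  with v(2) show False by simp
qed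

lemma vinv_props:
  "vandermonde_inv Mm Mp \<in> carrier_mat (nat (Mm+Mp)+1) (nat (Mm+Mp)+1)
   \<and> vandermonde_inv Mm Mp * vandermonde Mm Mp = 1\<^sub>m (nat (Mm + Mp) + 1)
   \<and> vandermonde Mm Mp * vandermonde_inv Mm Mp = 1\<^sub>m (nat (Mm + Mp) + 1)"
proof -
  let ?n = "nat (Mm+Mp)+1" and ?V = "vandermonde Mm Mp"
  have "?V \<in> Units (ring_mat TYPE(real) ?n undefined)"
    by (rule det_non_zero_imp_unit[OF vandermonde_carrier vandermonde_det])
  then obtain B where B: "B \<in> carrier_mat ?n ?n" "B * ?V = 1\<^sub>m ?n" "?V * B = 1\<^sub>m ?n"
    unfolding Units_def ring_mat_def by auto
  have uniq: "B' = B" if "B' \<in> carrier_mat ?n ?n" "B' * ?V = 1\<^sub>m ?n" "?V * B' = 1\<^sub>m ?n" for B'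
  proof -
    have "B' = B' * (?V * B)" using B that by simp
    also have "\<dots> = (B' * ?V) * B" using assoc_mult_mat[OF that(1) vandermonde_carrier B(1)] by simp
    also have "\<dots> = B" using that B by simp
    finally show ?thesis .
  qed
  have "vandermonde_inv Mm Mp = B" unfolding vandermonde_inv_def
    by (rule the_equality) (use B uniq in blast)+
  thus ?thesis using B by simp
qed

lemma V_Vinv:
  assumes "i \<le> nat (Mm+Mp)" "i' \<le> nat (Mm+Mp)"
  shows "(\<Sum>j\<le>nat (Mm+Mp). kk Mm i ^ j * vandermonde_inv Mm Mp $$ (j,i')) = (if i = i' then 1 else 0)"
proof -
  let ?n = "nat (Mm+Mp)"
  have C: "vandermonde_inv Mm Mp \<in> carrier_mat (?n+1) (?n+1)" using vinv_props by blast
  have "(vandermonde Mm Mp * vandermonde_inv Mm Mp) $$ (i,i') = (if i = i' then 1 else 0)"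
    using vinv_props[of Mm Mp] assms by simp
  moreover have "(vandermonde Mm Mp * vandermonde_inv Mm Mp) $$ (i,i') = (\<Sum>j = 0..<?n+1. kk Mm i ^ j * vandermonde_inv Mm Mp $$ (j,i'))"
    using assms C by (simp add: scalar_prod_def vandermonde_def kk_def)
  moreover have "(\<Sum>j = 0..<?n+1. kk Mm i ^ j * vandermonde_inv Mm Mp $$ (j,i')) = (\<Sum>j\<le>?n. kk Mm i ^ j * vandermonde_inv Mm Mp $$ (j,i'))" by (rule sum.cong) auto
  ultimately show ?thesis by linarith
qed

lemma Vinv_V:
  assumes "m \<le> nat (Mm+Mp)" "j \<le> nat (Mm+Mp)"
  shows "(\<Sum>i\<le>nat (Mm+Mp). vandermonde_inv Mm Mp $$ (m,i) * kk Mm i ^ j) = (if m = j then 1 else 0)"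
proof -
  let ?n = "nat (Mm+Mp)"
  have C: "vandermonde_inv Mm Mp \<in> carrier_mat (?n+1) (?n+1)" using vinv_props by blast
  have "(vandermonde_inv Mm Mp * vandermonde Mm Mp) $$ (m,j) = (if m = j then 1 else 0)"
    using vinv_props[of Mm Mp] assms by simp
  moreover have "(vandermonde_inv Mm Mp * vandermonde Mm Mp) $$ (m,j) = (\<Sum>i = 0..<?n+1. vandermonde_inv Mm Mp $$ (m,i) * kk Mm i ^ j)"
    using assms C by (simp add: scalar_prod_def vandermonde_def kk_def)
  moreover have "(\<Sum>i = 0..<?n+1. vandermonde_inv Mm Mp $$ (m,i) * kk Mm i ^ j) = (\<Sum>i\<le>?n. vandermonde_inv Mm Mp $$ (m,i) * kk Mm i ^ j)" by (rule sum.cong) auto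
  ultimately show ?thesis by linarith
qed

lemma nu_alt: "Mm + Mp \<ge> 0 \<Longrightarrow> nu Mm Mp m k = (\<Sum>i\<le>nat (Mm+Mp). vandermonde_inv Mm Mp $$ (m,i) * kk Mm i ^ k)"
  unfolding nu_def
proof (rule sum.reindex_bij_witness[of _ "\<lambda>i. int i - Mm" "\<lambda>l. nat (l + Mm)"])
qed (auto simp: kk_def)

lemma hpd_zero:
  fixes p :: "real poly"
  assumes "degree p < j" shows "(pderiv ^^ j) p = 0"
proof -
  obtain i where j: "j = Suc i" using assms by (cases j) auto
  have "degree ((pderiv ^^ i) p) = 0" using assms j by (simp add: degree_higher_pderiv)
  hence "pderiv ((pderiv ^^ i) p) = 0" by (simp add: pderiv_eq_0_iff)
  thus ?thesis using j by simp
qed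

lemma smult_sum_right: "Polynomial.smult c (sum f A) = (\<Sum>i\<in>A. Polynomial.smult c (f i))"
  by (induction A rule: infinite_finite_induct) (simp_all add: smult_add_right)

definition Op :: "nat \<Rightarrow> real fps \<Rightarrow> real \<Rightarrow> real poly \<Rightarrow> real poly" where
  "Op n a d p = (\<Sum>j\<le>n. Polynomial.smult (fps_nth a j * d ^ j) ((pderiv ^^ j) p))"

lemma degree_Op: "degree (Op n a d p) \<le> degree p"
  unfolding Op_def
  by (rule degree_sum_le) (auto intro: order.trans[OF degree_smult_le] simp: degree_higher_pderiv)

lemma hpd_hpd: "(pderiv ^^ i) ((pderiv ^^ j) p) = (pderiv ^^ (i + j)) p"
  by (simp add: funpow_add)

lemma hpd_Op: "(pderiv ^^ i) (Op n a d p) = Op n a d ((pderiv ^^ i) p)"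
  unfolding Op_def by (simp add: higher_pderiv_sum higher_pderiv_smult hpd_hpd add.commute)


lemma Op_comp:
  assumes "degree p \<le> n"
  shows "Op n a d (Op n b d p) = Op n (a * b) d p"
proof -
  let ?g = "\<lambda>i k. Polynomial.smult (fps_nth a i * fps_nth b k * d ^ (i + k)) ((pderiv ^^ (i + k)) p)"
  have "Op n a d (Op n b d p) = (\<Sum>i\<le>n. \<Sum>k\<le>n. ?g i k)"
    unfolding Op_def
    by (simp add: higher_pderiv_sum higher_pderiv_smult smult_sum_right hpd_hpd power_add mult_ac)
  also have "\<dots> = (\<Sum>(i,k)\<in>{..n}\<times>{..n}. ?g i k)" by (simp add: sum.cartesian_product)
  also have "\<dots> = (\<Sum>(i,k)\<in>{(i,k). i + k \<le> n}. ?g i k)"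
  proof (rule sum.mono_neutral_right)
    show "{(i, k). i + k \<le> n} \<subseteq> {..n} \<times> {..n}" by auto
    have z: "\<And>j. n < j \<Longrightarrow> (pderiv ^^ j) p = 0" using assms hpd_zero by (meson le_less_trans)
    show "\<forall>x\<in>{..n} \<times> {..n} - {(i, k). i + k \<le> n}. (case x of (i, k) \<Rightarrow> ?g i k) = 0"
    proof (intro ballI)
      fix x assume "x \<in> {..n} \<times> {..n} - {(i, k). i + k \<le> n}"
      then obtain i k where "x = (i,k)" "n < i + k" by auto
      thus "(case x of (i, k) \<Rightarrow> ?g i k) = 0" using z by simp
    qed
  qed auto
  also have "\<dots> = (\<Sum>m\<le>n. \<Sum>i\<le>m. ?g i (m - i))" by (rule sum.triangle_reindex_eq)
  also have "\<dots> = Op n (a * b) d p"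
    unfolding Op_def fps_mult_nth
    by (rule sum.cong) (auto simp: Polynomial.smult_sum atLeast0AtMost sum_distrib_right intro!: sum.cong)
  finally show ?thesis .
qed

lemma Op_one: "Op n 1 d p = p"
proof -
  have "Op n 1 d p = (\<Sum>j\<le>n. if j = 0 then p else 0)"
    unfolding Op_def by (rule sum.cong) (auto simp: fps_one_nth)
  thus ?thesis by simp
qed

lemma Op_sum: "Op n a d (\<Sum>i\<in>A. Polynomial.smult (c i) (P i)) = (\<Sum>i\<in>A. Polynomial.smult (c i) (Op n a d (P i)))"
  unfolding Op_def by (simp add: higher_pderiv_sum higher_pderiv_smult smult_sum_right sum.swap[of _ A] mult.commute)

lemma poly_taylor:
  fixes q :: "real poly"
  assumes "degree q \<le> n"
  shows "poly q s = (\<Sum>j\<le>n. poly ((pderiv ^^ j) q) y / fact j * (s - y) ^ j)"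
proof (cases "s = y")
  case True
  have "(\<Sum>j\<le>n. poly ((pderiv ^^ j) q) y / fact j * (s - y) ^ j) = (\<Sum>j\<in>{0}. poly ((pderiv ^^ j) q) y / fact j * (s - y) ^ j)"
    by (rule sum.mono_neutral_right) (auto simp: True)
  thus ?thesis by (simp add: True)
next
  case False
  obtain t where "poly q s = (\<Sum>m<Suc n. (poly ((pderiv ^^ m) q) y / fact m) * (s - y)^m)
      + (poly ((pderiv ^^ Suc n) q) t / fact (Suc n)) * (s - y)^Suc n"
    using Taylor[of "Suc n" "\<lambda>m. poly ((pderiv ^^ m) q)" "poly q" "min s y - 1" "max s y + 1" y s] False
    by (force simp: poly_DERIV)
  moreover have "(pderiv ^^ Suc n) q = 0" using assms by (simp add: hpd_zero del: funpow.simps)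
  ultimately show ?thesis by (simp add: lessThan_Suc_atMost del: funpow.simps)
qed

lemma integral_monomials:
  fixes c :: "nat \<Rightarrow> real"
  assumes "d > 0"
  shows "((\<lambda>s. \<Sum>j\<le>n. c j * (s - y) ^ j) has_integral
           (\<Sum>j\<le>n. c j * ((d/2) ^ Suc j - (- (d/2)) ^ Suc j) / Suc j)) {y - d/2 .. y + d/2}"
proof -
  let ?F = "\<lambda>s. \<Sum>j\<le>n. c j * (s - y) ^ Suc j / Suc j"
  have "((\<lambda>s. \<Sum>j\<le>n. c j * (s - y) ^ j) has_integral (?F (y + d/2) - ?F (y - d/2))) {y - d/2 .. y + d/2}"
  proof (rule fundamental_theorem_of_calculus)
    show "y - d / 2 \<le> y + d / 2" using assms by simp
    fix s assume "s \<in> {y - d / 2..y + d / 2}"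
    have "(?F has_real_derivative (\<Sum>j\<le>n. c j * (s - y) ^ j)) (at s within {y - d / 2..y + d / 2})"
      apply (rule derivative_eq_intros refl | simp)+
      apply (simp add: mult.commute)
      done
    thus "(?F has_vector_derivative (\<Sum>j\<le>n. c j * (s - y) ^ j)) (at s within {y - d / 2..y + d / 2})"
      by (simp add: has_real_derivative_iff_has_vector_derivative)
  qed
  moreover have "?F (y + d/2) - ?F (y - d/2) = (\<Sum>j\<le>n. c j * ((d/2) ^ Suc j - (- (d/2)) ^ Suc j) / Suc j)"
  proof -
    have e1: "y + d/2 - y = d/2" and e2: "y - d/2 - y = -(d/2)" by simp_all
    show ?thesis unfolding sum_subtractf[symmetric]
      by (rule sum.cong) (simp_all only: e1 e2 diff_divide_distrib right_diff_distrib)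
  qed
  ultimately show ?thesis by simp
qed

definition Sf :: "real fps" where "Sf = Abs_fps (\<lambda>j. if even j then 1 / (2 ^ j * fact (j + 1)) else 0)"
definition Tf :: "real fps" where "Tf = Abs_fps (\<lambda>j. if even j then tau (j div 2) else 0)"
definition Rf :: "real fps" where "Rf = Abs_fps (\<lambda>l. (-1) ^ l / fact (l + 1))"

lemma integral_poly:
  fixes q :: "real poly"
  assumes "d > 0" "degree q \<le> n"
  shows "integral {y - d/2 .. y + d/2} (poly q) = d * poly (Op n Sf d q) y"
proof -
  let ?c = "\<lambda>j. poly ((pderiv ^^ j) q) y / fact j"
  have "poly q = (\<lambda>s. \<Sum>j\<le>n. ?c j * (s - y) ^ j)"
    using poly_taylor[OF assms(2)] by auto
  hence "integral {y - d/2 .. y + d/2} (poly q) = (\<Sum>j\<le>n. ?c j * ((d/2) ^ Suc j - (- (d/2)) ^ Suc j) / Suc j)"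
    using integral_monomials[OF assms(1), where c= ?c and n=n and y=y] by (simp add: integral_unique)
  also have "\<dots> = d * poly (Op n Sf d q) y"
    unfolding Op_def poly_sum sum_distrib_left
  proof (rule sum.cong)
    fix j assume "j \<in> {..n}"
    show "?c j * ((d/2) ^ Suc j - (- (d/2)) ^ Suc j) / Suc j = d * poly (Polynomial.smult (fps_nth Sf j * d ^ j) ((pderiv ^^ j) q)) y"
    proof (cases "even j")
      case True
      have "(- (d/2)) ^ Suc j = - ((d/2) ^ Suc j)" using True by (simp add: power_minus_odd)
      thus ?thesis using True by (simp add: Sf_def field_simps power_divide)
    next
      case False
      have "(- (d/2)) ^ Suc j = (d/2) ^ Suc j" using False by (simp add: power_minus_even)
      thus ?thesis using False by (simp add: Sf_def)
    qed
  qed simp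
  finally show ?thesis .
qed

lemma sum_even:
  fixes g :: "nat \<Rightarrow> real"
  assumes "\<And>i. odd i \<Longrightarrow> g i = 0"
  shows "(\<Sum>i=0..s. g i) = (\<Sum>k\<le>s div 2. g (2 * k))"
proof -
  have "(\<Sum>i=0..s. g i) = (\<Sum>i\<in>{i\<in>{0..s}. even i}. g i)"
    by (rule sum.mono_neutral_right) (auto simp: assms)
  also have "{i\<in>{0..s}. even i} = (\<lambda>k. 2 * k) ` {..s div 2}"
  proof
    show "{i \<in> {0..s}. even i} \<subseteq> (*) 2 ` {..s div 2}"
    proof
      fix i assume "i \<in> {i \<in> {0..s}. even i}"
      then obtain k where "i = 2 * k" "2 * k \<le> s" by auto
      thus "i \<in> (*) 2 ` {..s div 2}" by auto
    qed
  qed auto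
  also have "(\<Sum>i\<in>(\<lambda>k. 2 * k) ` {..s div 2}. g i) = (\<Sum>k\<le>s div 2. g (2 * k))"
    by (subst sum.reindex) (auto simp: inj_on_def)
  finally show ?thesis .
qed

lemma Tf_Sf: "Tf * Sf = 1"
proof (rule fps_ext)
  fix n
  show "fps_nth (Tf * Sf) n = fps_nth 1 n"
  proof (cases "odd n")
    case True
    have "fps_nth (Tf * Sf) n = (\<Sum>i = 0..n. 0)"
      unfolding fps_mult_nth by (rule sum.cong) (use True in \<open>auto simp: Tf_def Sf_def\<close>)
    thus ?thesis using True by (cases n) (auto simp: fps_one_nth)
  next
    case False
    then obtain K where n: "n = 2 * K" by auto
    have "fps_nth (Tf * Sf) n = (\<Sum>k\<le>K. fps_nth Tf (2 * k) * fps_nth Sf (n - 2 * k))"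
      unfolding fps_mult_nth by (subst sum_even) (auto simp: Tf_def n)
    also have "\<dots> = (\<Sum>k\<le>K. tau k / (2 ^ (2 * K - 2 * k) * fact (2 * K - 2 * k + 1)))"
      by (rule sum.cong) (auto simp: Tf_def Sf_def n)
    also have "\<dots> = fps_nth 1 n"
    proof (cases K)
      case 0 thus ?thesis by (simp add: n)
    next
      case (Suc k)
      have "(\<Sum>s\<le>K. tau s / (2 ^ (2 * K - 2 * s) * fact (2 * K - 2 * s + 1)))
          = tau K + (\<Sum>s<K. tau s / (2 ^ (2 * K - 2 * s) * fact (2 * K - 2 * s + 1)))"
        by (simp add: lessThan_Suc_atMost[symmetric] Suc)
      also have "(\<Sum>s<K. tau s / (2 ^ (2 * K - 2 * s) * fact (2 * K - 2 * s + 1))) = - tau K"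
        unfolding Suc by (simp only: tau.simps minus_divide_left[symmetric] sum_negf minus_minus)
      finally show ?thesis using Suc n by simp
    qed
    finally show ?thesis .
  qed
qed

lemma fps_X_cancel: "f * fps_X = g * fps_X \<Longrightarrow> (f :: real fps) = g"
proof (rule fps_ext)
  fix n assume "f * fps_X = g * fps_X"
  hence "fps_nth (f * fps_X) (Suc n) = fps_nth (g * fps_X) (Suc n)" by simp
  thus "fps_nth f n = fps_nth g n" by (simp add: fps_X_mult_right_nth)
qed

lemma Sf_X: "Sf * fps_X = fps_exp (1/2) - fps_exp (-1/2)"
proof (rule fps_ext)
  fix n show "fps_nth (Sf * fps_X) n = fps_nth (fps_exp (1/2) - fps_exp (-1/2)) n"
  proof (cases n)
    case (Suc m)
    show ?thesis
    proof (cases "even m")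
      case True
      have "(- 1 / 2 :: real) ^ Suc m = - ((1/2) ^ Suc m)" using True by (simp add: power_minus_odd)
      hence "((1/2::real) ^ Suc m - (- 1 / 2) ^ Suc m) / fact (Suc m) = 2 * (1/2) ^ Suc m / fact (Suc m)" by simp
      also have "\<dots> = 1 / (2 ^ m * fact (m + 1))" by (simp add: power_divide)
      finally have r: "((1/2::real) ^ Suc m - (- 1 / 2) ^ Suc m) / fact (Suc m) = 1 / (2 ^ m * fact (m + 1))" .
      have "fps_nth (Sf * fps_X) n = 1 / (2 ^ m * fact (m + 1))" using Suc True by (simp add: fps_X_mult_right_nth Sf_def)
      moreover have "fps_nth (fps_exp (1/2) - fps_exp (-1/2)) n = ((1/2::real) ^ Suc m - (- 1 / 2) ^ Suc m) / fact (Suc m)"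
        using Suc by (simp only: fps_sub_nth fps_exp_nth of_nat_fact diff_divide_distrib)
      ultimately show ?thesis using r by simp
    next
      case False
      thus ?thesis using Suc by (simp add: fps_X_mult_right_nth Sf_def power_minus_even power_divide)
    qed
  qed (simp add: fps_X_mult_right_nth)
qed

lemma Rf_X: "Rf * fps_X = 1 - fps_exp (-1)"
proof (rule fps_ext)
  fix n show "fps_nth (Rf * fps_X) n = fps_nth (1 - fps_exp (-1)) n"
    by (cases n) (simp_all add: fps_X_mult_right_nth Rf_def fps_one_nth algebra_simps)
qed

lemma Phi_Rf: "Tf * fps_exp (1/2) * Rf = 1"
proof (rule fps_X_cancel)
  have e: "fps_exp (1/2) * fps_exp (-1) = fps_exp (-1/2 :: real)"
    using fps_exp_add_mult[of "1/2" "-1::real"] by simp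
  have "Tf * fps_exp (1/2) * Rf * fps_X = Tf * fps_exp (1/2) * (Rf * fps_X)"
    by (simp add: mult.assoc)
  also have "\<dots> = Tf * fps_exp (1/2) * (1 - fps_exp (-1))" by (simp add: Rf_X)
  also have "\<dots> = Tf * (fps_exp (1/2) - fps_exp (1/2) * fps_exp (-1))"
    by (simp add: algebra_simps)
  also have "\<dots> = Tf * (Sf * fps_X)" by (simp add: e Sf_X)
  also have "\<dots> = 1 * fps_X" by (simp add: mult.assoc[symmetric] Tf_Sf)
  finally show "Tf * fps_exp (1/2) * Rf * fps_X = 1 * fps_X" .
qed

definition Lg :: "int \<Rightarrow> int \<Rightarrow> nat \<Rightarrow> real poly" where
  "Lg Mm Mp i = (\<Sum>m\<le>nat (Mm+Mp). Polynomial.smult (vandermonde_inv Mm Mp $$ (m,i)) (monom 1 m))"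

lemma degree_Lg: "degree (Lg Mm Mp i) \<le> nat (Mm+Mp)"
  unfolding Lg_def
  by (rule degree_sum_le) (auto intro: order.trans[OF degree_smult_le] order.trans[OF degree_monom_le])

lemma poly_Lg:
  assumes "i \<le> nat (Mm+Mp)" "i' \<le> nat (Mm+Mp)"
  shows "poly (Lg Mm Mp i) (kk Mm i') = (if i' = i then 1 else 0)"
proof -
  have "poly (Lg Mm Mp i) (kk Mm i') = (\<Sum>m\<le>nat (Mm+Mp). kk Mm i' ^ m * vandermonde_inv Mm Mp $$ (m,i))"
    unfolding Lg_def by (simp add: poly_sum poly_monom mult.commute)
  thus ?thesis using V_Vinv[OF assms(2,1)] by simp
qed

definition sc :: "real \<Rightarrow> real \<Rightarrow> real poly \<Rightarrow> real poly" where
  "sc c dx p = pcompose p [:-c/dx, 1/dx:]"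

lemma poly_sc: "poly (sc c dx p) y = poly p ((y - c) / dx)"
  by (simp add: sc_def poly_pcompose diff_divide_distrib)

lemma degree_sc: "degree (sc c dx p) \<le> degree p"
proof -
  have "degree (sc c dx p) \<le> degree p * degree [:-c/dx, 1/dx:]" unfolding sc_def by (rule degree_pcompose_le)
  also have "\<dots> \<le> degree p * 1" by (rule mult_le_mono2) simp
  finally show ?thesis by simp
qed

lemma sc_sum: "sc c dx (\<Sum>i\<in>A. Polynomial.smult (a i) (P i)) = (\<Sum>i\<in>A. Polynomial.smult (a i) (sc c dx (P i)))"
  unfolding sc_def by (simp add: pcompose_sum pcompose_smult)

lemma pf_eq:
  assumes M: "Mm + Mp \<ge> 0" and dx: "dx \<noteq> 0"
  shows "pf f Mm Mp dx c = (\<Sum>i\<le>nat (Mm+Mp). Polynomial.smult (f (c + kk Mm i * dx)) (sc c dx (Lg Mm Mp i)))"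
    (is "_ = ?P")
proof -
  let ?n = "nat (Mm+Mp)"
  have dP: "degree ?P \<le> ?n"
    by (rule degree_sum_le) (auto intro: order.trans[OF degree_smult_le] order.trans[OF degree_sc] degree_Lg)
  have evP: "poly ?P (c + kk Mm i' * dx) = f (c + kk Mm i' * dx)" if "i' \<le> ?n" for i'
  proof -
    have "poly ?P (c + kk Mm i' * dx) = (\<Sum>i\<le>?n. f (c + kk Mm i * dx) * (if i' = i then 1 else 0))"
      unfolding poly_sum poly_smult poly_sc using dx that by (intro sum.cong) (auto simp: poly_Lg)
    also have "\<dots> = (\<Sum>i\<le>?n. if i = i' then f (c + kk Mm i' * dx) else 0)"
      by (rule sum.cong) auto
    also have "\<dots> = f (c + kk Mm i' * dx)" using that by simp
    finally show ?thesis .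
  qed
  have evP': "poly ?P (c + real_of_int k * dx) = f (c + real_of_int k * dx)" if "k \<in> {-Mm..Mp}" for k
  proof -
    have "kk Mm (nat (k + Mm)) = real_of_int k" "nat (k + Mm) \<le> ?n" using that by (auto simp: kk_def)
    thus ?thesis using evP[of "nat (k + Mm)"] by simp
  qed
  show ?thesis unfolding pf_def
  proof (rule the_equality)
    show "degree ?P \<le> ?n \<and> (\<forall>k\<in>{-Mm..Mp}. poly ?P (c + real_of_int k * dx) = f (c + real_of_int k * dx))"
      using dP evP' by blast
    fix p assume p: "degree p \<le> ?n \<and> (\<forall>k\<in>{-Mm..Mp}. poly p (c + real_of_int k * dx) = f (c + real_of_int k * dx))"
    show "p = ?P"
    proof (rule poly_eq_on_stencil[OF _ dP dx, where Mm=Mm and c=c])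
      show "degree p \<le> ?n" using p by blast
      show "\<forall>i\<le>?n. poly p (c + kk Mm i * dx) = poly ?P (c + kk Mm i * dx)"
      proof (intro allI impI)
        fix i assume i: "i \<le> ?n"
        have "int i - Mm \<in> {-Mm..Mp}" using i M by auto
        hence "poly p (c + real_of_int (int i - Mm) * dx) = f (c + real_of_int (int i - Mm) * dx)" using p by blast
        hence "poly p (c + kk Mm i * dx) = f (c + kk Mm i * dx)" by (simp add: kk_def)
        thus "poly p (c + kk Mm i * dx) = poly ?P (c + kk Mm i * dx)" using evP[OF i] by simp
      qed
    qed
  qed
qed

lemma ph_eq:
  assumes dx: "dx > 0" and dp: "degree p \<le> nat (Mm+Mp)"
  shows "ph Mm Mp dx p = Op (nat (Mm+Mp)) Tf dx p"
proof -
  let ?n = "nat (Mm+Mp)"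
  have ST: "Sf * Tf = 1" using Tf_Sf by (simp add: mult.commute)
  show ?thesis unfolding ph_def
  proof (rule the_equality)
    have "poly p y = 1 / dx * integral {y - dx / 2..y + dx / 2} (poly (Op ?n Tf dx p))" for y
    proof -
      have "1 / dx * integral {y - dx / 2..y + dx / 2} (poly (Op ?n Tf dx p)) = poly (Op ?n Sf dx (Op ?n Tf dx p)) y"
        using integral_poly[OF dx order.trans[OF degree_Op dp]] dx by simp
      also have "\<dots> = poly p y" by (simp add: Op_comp[OF dp] ST Op_one)
      finally show ?thesis by simp
    qed
    thus "degree (Op ?n Tf dx p) \<le> ?n \<and> (\<forall>y. poly p y = 1 / dx * integral {y - dx / 2..y + dx / 2} (poly (Op ?n Tf dx p)))"
      using order.trans[OF degree_Op dp] by blast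
    fix q assume q: "degree q \<le> ?n \<and> (\<forall>y. poly p y = 1 / dx * integral {y - dx / 2..y + dx / 2} (poly q))"
    have "poly p y = poly (Op ?n Sf dx q) y" for y
      using q integral_poly[OF dx, of q ?n y] dx by simp
    hence "poly p = poly (Op ?n Sf dx q)" by (rule ext)
    hence "p = Op ?n Sf dx q" by (simp add: poly_eq_poly_eq_iff)
    hence "Op ?n Tf dx p = Op ?n (Tf * Sf) dx q" using Op_comp q by simp
    thus "q = Op ?n Tf dx p" by (simp add: Tf_Sf Op_one)
  qed
qed

lemma hpd_sc: "(pderiv ^^ j) (sc c dx p) = Polynomial.smult ((1/dx)^j) (sc c dx ((pderiv ^^ j) p))"
proof (induction j)
  case (Suc j)
  have "pderiv [:- c / dx, 1 / dx:] = [:1/dx:]" by (simp add: pderiv_pCons)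
  thus ?case using Suc
    by (simp add: pderiv_smult sc_def pderiv_pcompose smult_smult mult.commute)
qed simp

lemma Op_sc:
  assumes "dx \<noteq> 0"
  shows "poly (Op n a dx (sc c dx p)) (c + dx/2) = poly (Op n a 1 p) (1/2)"
  unfolding Op_def poly_sum
proof (rule sum.cong)
  fix j
  have "dx ^ j * (1 / dx) ^ j = 1" using assms by (simp add: power_one_over field_simps)
  moreover have "(c + dx / 2 - c) / dx = 1/2" using assms by simp
  ultimately show "poly (Polynomial.smult (fps_nth a j * dx ^ j) ((pderiv ^^ j) (sc c dx p))) (c + dx / 2) =
         poly (Polynomial.smult (fps_nth a j * 1 ^ j) ((pderiv ^^ j) p)) (1 / 2)"
    using assms by (simp add: hpd_sc poly_sc mult.assoc)
qed simp

definition w :: "int \<Rightarrow> int \<Rightarrow> nat \<Rightarrow> real" where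
  "w Mm Mp i = poly (Op (nat (Mm+Mp)) Tf 1 (Lg Mm Mp i)) (1/2)"

lemma hhat_eq:
  assumes M: "Mm + Mp \<ge> 0" and dx: "dx > 0"
  shows "hhat f Mm Mp dx c = (\<Sum>i\<le>nat (Mm+Mp). w Mm Mp i * f (c + kk Mm i * dx))"
proof -
  let ?n = "nat (Mm+Mp)"
  have dxne: "dx \<noteq> 0" using dx by simp
  have dP: "degree (pf f Mm Mp dx c) \<le> ?n" unfolding pf_eq[OF M dxne]
    by (intro degree_sum_le) (auto intro: order.trans[OF degree_smult_le] order.trans[OF degree_sc] degree_Lg)
  have "hhat f Mm Mp dx c = poly (Op ?n Tf dx (pf f Mm Mp dx c)) (c + dx/2)"
    unfolding hhat_def ph_eq[OF dx dP] ..
  also have "\<dots> = (\<Sum>i\<le>?n. f (c + kk Mm i * dx) * poly (Op ?n Tf dx (sc c dx (Lg Mm Mp i))) (c + dx/2))"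
    using dx by (simp add: pf_eq[OF M dxne] Op_sum poly_sum)
  also have "\<dots> = (\<Sum>i\<le>?n. w Mm Mp i * f (c + kk Mm i * dx))"
    using dx by (simp add: Op_sc w_def mult.commute)
  finally show ?thesis .
qed

definition ff :: "nat \<Rightarrow> nat \<Rightarrow> real" where "ff m j = (\<Prod>i<j. real (m - i))"

lemma hpd_monom: "(pderiv ^^ j) (monom c m) = monom (c * ff m j) (m - j)"
  by (induction j) (simp_all add: ff_def pderiv_monom mult_ac)

lemma moments:
  assumes M: "Mm + Mp \<ge> 0"
  shows "(\<Sum>i\<le>nat (Mm+Mp). w Mm Mp i * kk Mm i ^ s)
       = (\<Sum>m\<le>nat (Mm+Mp). nu Mm Mp m s * (\<Sum>j\<le>nat (Mm+Mp). fps_nth Tf j * ff m j * (1/2) ^ (m - j)))"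
proof -
  let ?n = "nat (Mm+Mp)" and ?V = "vandermonde_inv Mm Mp"
  have "(\<Sum>i\<le>?n. Polynomial.smult (kk Mm i ^ s) (Lg Mm Mp i))
      = (\<Sum>m\<le>?n. Polynomial.smult (nu Mm Mp m s) (monom 1 m))"
    unfolding Lg_def nu_alt[OF M] smult_sum_right smult_smult
    by (subst sum.swap) (simp add: smult_sum mult.commute)
  moreover have "(\<Sum>i\<le>?n. w Mm Mp i * kk Mm i ^ s) = poly (Op ?n Tf 1 (\<Sum>i\<le>?n. Polynomial.smult (kk Mm i ^ s) (Lg Mm Mp i))) (1/2)"
    by (simp add: w_def Op_sum poly_sum mult.commute)
  ultimately have "(\<Sum>i\<le>?n. w Mm Mp i * kk Mm i ^ s) = poly (Op ?n Tf 1 (\<Sum>m\<le>?n. Polynomial.smult (nu Mm Mp m s) (monom 1 m))) (1/2)"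
    by simp
  also have "\<dots> = (\<Sum>m\<le>?n. nu Mm Mp m s * (\<Sum>j\<le>?n. fps_nth Tf j * ff m j * (1/2) ^ (m - j)))"
    unfolding Op_sum poly_sum poly_smult by (simp add: Op_def poly_sum hpd_monom poly_monom mult_ac)
  finally show ?thesis .
qed

definition Phi :: "nat \<Rightarrow> real" where "Phi s = fps_nth (Tf * fps_exp (1/2)) s"

lemma Phi_alt: "Phi s = (\<Sum>k\<le>s div 2. tau k / fact (s - 2 * k) * (1/2) ^ (s - 2 * k))"
proof -
  have "Phi s = (\<Sum>i=0..s. fps_nth Tf i * ((1/2) ^ (s - i) / fact (s - i)))"
    unfolding Phi_def fps_mult_nth by simp
  also have "\<dots> = (\<Sum>k\<le>s div 2. fps_nth Tf (2 * k) * ((1/2) ^ (s - 2 * k) / fact (s - 2 * k)))"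
    by (rule sum_even) (simp add: Tf_def)
  also have "\<dots> = (\<Sum>k\<le>s div 2. tau k / fact (s - 2 * k) * (1/2) ^ (s - 2 * k))"
    by (rule sum.cong) (simp_all add: Tf_def)
  finally show ?thesis .
qed

lemma ff_zero: "m < j \<Longrightarrow> ff m j = 0"
  unfolding ff_def by (rule prod_zero) (auto intro: bexI[of _ m])

lemma ff_fact: "j \<le> m \<Longrightarrow> ff m j * fact (m - j) = fact m"
proof (induction j)
  case (Suc j)
  have "fact (m - j) = real (m - j) * fact (m - Suc j)"
    using Suc.prems by (metis Suc_diff_Suc fact_Suc of_nat_fact Suc_le_lessD)
  hence "ff m (Suc j) * fact (m - Suc j) = ff m j * fact (m - j)"
    by (simp add: ff_def)
  thus ?case using Suc by simp
qed (simp add: ff_def)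

lemma ff_div: "j \<le> m \<Longrightarrow> ff m j = fact m / fact (m - j)"
  using ff_fact[of j m] by (simp add: field_simps)

lemma inner_sum:
  assumes "m \<le> n"
  shows "(\<Sum>j\<le>n. fps_nth Tf j * ff m j * (1/2) ^ (m - j)) = (\<Sum>k\<le>m div 2. tau k * ff m (2*k) * (1/2) ^ (m - 2*k))"
proof -
  have "(\<Sum>j\<le>n. fps_nth Tf j * ff m j * (1/2) ^ (m - j)) = (\<Sum>j=0..m. fps_nth Tf j * ff m j * (1/2) ^ (m - j))"
    by (rule sum.mono_neutral_right) (use assms in \<open>auto simp: ff_zero\<close>)
  also have "\<dots> = (\<Sum>k\<le>m div 2. fps_nth Tf (2*k) * ff m (2*k) * (1/2) ^ (m - 2*k))"
    by (rule sum_even) (simp add: Tf_def)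
  also have "\<dots> = (\<Sum>k\<le>m div 2. tau k * ff m (2*k) * (1/2) ^ (m - 2*k))"
    by (simp add: Tf_def)
  finally show ?thesis .
qed

lemma double_reindex:
  fixes F :: "nat \<Rightarrow> nat \<Rightarrow> real"
  shows "(\<Sum>m\<le>n. \<Sum>k\<le>m div 2. F m k) = (\<Sum>m\<le>n. \<Sum>k\<le>(n - m) div 2. F (m + 2*k) k)"
proof -
  have "(\<Sum>m\<le>n. \<Sum>k\<le>m div 2. F m k) = (\<Sum>(m,k)\<in>(SIGMA m:{..n}. {..m div 2}). F m k)"
    by (simp add: sum.Sigma)
  also have "\<dots> = (\<Sum>(m,k)\<in>(SIGMA m:{..n}. {..(n - m) div 2}). F (m + 2*k) k)"
    by (rule sum.reindex_bij_witness[where i="\<lambda>(m,k). (m + 2*k, k)" and j="\<lambda>(m,k). (m - 2*k, k)"]) auto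
  also have "\<dots> = (\<Sum>m\<le>n. \<Sum>k\<le>(n - m) div 2. F (m + 2*k) k)"
    by (simp add: sum.Sigma)
  finally show ?thesis .
qed

definition Wm :: "int \<Rightarrow> int \<Rightarrow> nat \<Rightarrow> real" where
  "Wm Mm Mp s = (\<Sum>i\<le>nat (Mm+Mp). w Mm Mp i * kk Mm i ^ s)"

lemma R1:
  assumes M: "Mm + Mp \<ge> 0"
  shows "Wm Mm Mp s / fact s = mu Mm Mp s (1/2) + Phi s"
proof -
  let ?n = "nat (Mm+Mp)"
  have "Wm Mm Mp s = (\<Sum>m\<le>?n. nu Mm Mp m s * (\<Sum>k\<le>m div 2. tau k * ff m (2*k) * (1/2) ^ (m - 2*k)))"
    unfolding Wm_def moments[OF M] by (rule sum.cong) (simp_all add: inner_sum)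
  also have "\<dots> = (\<Sum>m\<le>?n. \<Sum>k\<le>m div 2. nu Mm Mp m s * tau k * ff m (2*k) * (1/2) ^ (m - 2*k))"
    by (simp add: sum_distrib_left mult_ac)
  also have "\<dots> = (\<Sum>m\<le>?n. \<Sum>k\<le>(?n - m) div 2. nu Mm Mp (m + 2*k) s * tau k * ff (m + 2*k) (2*k) * (1/2) ^ (m + 2*k - 2*k))"
    by (rule double_reindex)
  also have "\<dots> = fact s * (\<Sum>m\<le>?n. (\<Sum>k\<le>(?n - m) div 2.
           tau k * nu Mm Mp (m + 2 * k) s * fact (m + 2 * k) / (fact s * fact m)) * (1/2) ^ m)"
    by (simp add: sum_distrib_left sum_distrib_right ff_div mult_ac)
  finally have W: "Wm Mm Mp s / fact s = (\<Sum>m\<le>?n. (\<Sum>k\<le>(?n - m) div 2.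
           tau k * nu Mm Mp (m + 2 * k) s * fact (m + 2 * k) / (fact s * fact m)) * (1/2) ^ m)"
    by simp
  have P: "(\<Sum>k\<le>s div 2. - tau k / fact (s - 2 * k) * (1/2) ^ (s - 2 * k)) = - Phi s"
    unfolding Phi_alt by (simp add: sum_negf[symmetric])
  show ?thesis unfolding mu_def P W by simp
qed

lemma nu_delta:
  assumes M: "Mm + Mp \<ge> 0" and "m \<le> nat (Mm+Mp)" "s \<le> nat (Mm+Mp)"
  shows "nu Mm Mp m s = (if m = s then 1 else 0)"
  unfolding nu_alt[OF M] using Vinv_V[OF assms(2,3)] .

lemma R2:
  assumes M: "Mm + Mp \<ge> 0" and s: "s \<le> nat (Mm+Mp)"
  shows "mu Mm Mp s (1/2) = 0"
proof -
  let ?n = "nat (Mm+Mp)"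
  have "Wm Mm Mp s = (\<Sum>m\<le>?n. (if m = s then 1 else 0) * (\<Sum>j\<le>?n. fps_nth Tf j * ff m j * (1/2) ^ (m - j)))"
    unfolding Wm_def moments[OF M] by (rule sum.cong) (simp_all add: nu_delta[OF M _ s])
  also have "\<dots> = (\<Sum>j\<le>?n. fps_nth Tf j * ff s j * (1/2) ^ (s - j))"
    using s by (simp add: if_distrib[of "\<lambda>x. x * _"] cong: if_cong)
  also have "\<dots> = (\<Sum>j=0..s. fps_nth Tf j * ff s j * (1/2) ^ (s - j))"
    by (rule sum.mono_neutral_right) (use s in \<open>auto simp: ff_zero\<close>)
  also have "\<dots> = fact s * (\<Sum>j=0..s. fps_nth Tf j * ((1/2) ^ (s - j) / fact (s - j)))"
    by (simp add: sum_distrib_left ff_div mult_ac)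
  also have "\<dots> = fact s * Phi s"
    unfolding Phi_def fps_mult_nth by simp
  finally show ?thesis using R1[OF M, of s] by simp
qed

lemma key_identity:
  assumes M: "Mm + Mp \<ge> 0"
  shows "(\<Sum>i\<le>nat (Mm+Mp). w Mm Mp i * (kk Mm i ^ Suc n' - (kk Mm i - 1) ^ Suc n')) / fact (Suc n')
     = (if n' = 0 then 1 else 0) + (if nat (Mm+Mp) + 1 \<le> n' then Lambda Mm Mp n' else 0)"
proof -
  let ?n = "nat (Mm+Mp)"
  have bin: "x ^ Suc n' - (x - 1) ^ Suc n' = (\<Sum>s\<le>n'. of_nat (Suc n' choose s) * (-1) ^ (n' - s) * x ^ s)" for x :: real
  proof -
    have "(x - 1) ^ Suc n' = (\<Sum>s\<le>Suc n'. of_nat (Suc n' choose s) * x ^ s * (-1) ^ (Suc n' - s))"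
      using binomial_ring[of x "-1" "Suc n'"] by simp
    also have "\<dots> = (\<Sum>s\<le>n'. of_nat (Suc n' choose s) * x ^ s * (-1) ^ (Suc n' - s)) + x ^ Suc n'"
      by (simp add: sum.atMost_Suc)
    also have "(\<Sum>s\<le>n'. of_nat (Suc n' choose s) * x ^ s * (-1) ^ (Suc n' - s))
         = - (\<Sum>s\<le>n'. of_nat (Suc n' choose s) * (-1) ^ (n' - s) * x ^ s)"
      by (simp add: sum_negf[symmetric] Suc_diff_le mult_ac)
    finally show ?thesis by simp
  qed
  have "(\<Sum>i\<le>?n. w Mm Mp i * (kk Mm i ^ Suc n' - (kk Mm i - 1) ^ Suc n')) / fact (Suc n')
      = (\<Sum>s\<le>n'. of_nat (Suc n' choose s) * (-1) ^ (n' - s) / fact (Suc n') * Wm Mm Mp s)"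
    unfolding bin Wm_def by (simp add: sum_distrib_left sum_distrib_right sum_divide_distrib mult_ac sum.swap[of _ "{..?n}"])
  also have "\<dots> = (\<Sum>s\<le>n'. fps_nth Rf (n' - s) * (Wm Mm Mp s / fact s))"
  proof (rule sum.cong)
    fix s assume "s \<in> {..n'}"
    hence s: "s \<le> n'" by simp
    have "of_nat (Suc n' choose s) = fact (Suc n') / (fact s * fact (Suc n' - s) :: real)"
      using s by (simp add: binomial_fact)
    moreover have "Suc n' - s = n' - s + 1" using s by simp
    ultimately show "of_nat (Suc n' choose s) * (-1) ^ (n' - s) / fact (Suc n') * Wm Mm Mp s = fps_nth Rf (n' - s) * (Wm Mm Mp s / fact s)"
      by (simp add: Rf_def)
  qed simp
  also have "\<dots> = (\<Sum>s\<le>n'. fps_nth Rf (n' - s) * mu Mm Mp s (1/2)) + (\<Sum>s\<le>n'. Phi s * fps_nth Rf (n' - s))"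
    by (simp add: R1[OF M] distrib_left sum.distrib mult.commute)
  also have "(\<Sum>s\<le>n'. Phi s * fps_nth Rf (n' - s)) = (if n' = 0 then 1 else 0)"
  proof -
    have "(\<Sum>s\<le>n'. Phi s * fps_nth Rf (n' - s)) = fps_nth (Tf * fps_exp (1/2) * Rf) n'"
      unfolding fps_mult_nth[of "Tf * fps_exp (1/2)"] Phi_def by (simp add: atLeast0AtMost)
    thus ?thesis by (simp add: Phi_Rf fps_one_nth)
  qed
  also have "(\<Sum>s\<le>n'. fps_nth Rf (n' - s) * mu Mm Mp s (1/2)) = (if ?n + 1 \<le> n' then Lambda Mm Mp n' else 0)"
  proof -
    have "(\<Sum>s\<le>n'. fps_nth Rf (n' - s) * mu Mm Mp s (1/2)) = (\<Sum>s\<in>{?n+1..n'}. fps_nth Rf (n' - s) * mu Mm Mp s (1/2))"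
      by (rule sum.mono_neutral_right) (auto simp: R2[OF M])
    also have "\<dots> = (if ?n + 1 \<le> n' then Lambda Mm Mp n' else 0)"
    proof (cases "?n + 1 \<le> n'")
      case True
      have "Lambda Mm Mp n' = (\<Sum>l\<le>n' - ?n - 1. fps_nth Rf l * mu Mm Mp (n' - l) (1/2))"
        unfolding Lambda_def Rf_def by simp
      also have "\<dots> = (\<Sum>s\<in>{?n+1..n'}. fps_nth Rf (n' - s) * mu Mm Mp s (1/2))"
        by (rule sum.reindex_bij_witness[where i="\<lambda>s. n' - s" and j="\<lambda>l. n' - l"]) (use True in auto)
      finally show ?thesis using True by simp
    qed simp
    finally show ?thesis .
  qed
  finally show ?thesis by simp
qed

lemma expand:
  fixes f :: "real \<Rightarrow> real" and D :: "nat \<Rightarrow> real" and N :: nat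
  assumes M: "Mm + Mp \<ge> 0" and dx: "dx > 0"
  defines "P \<equiv> (\<lambda>h. \<Sum>m\<le>Suc N. D m / fact m * h ^ m)"
  shows "(hhat f Mm Mp dx x - hhat f Mm Mp dx (x - dx)) / dx - D 1
           - (\<Sum>n=nat (Mm + Mp) + 1..N. Lambda Mm Mp n * dx ^ n * D (n + 1))
         = (\<Sum>i\<le>nat (Mm+Mp). w Mm Mp i * ((f (x + kk Mm i * dx) - P (kk Mm i * dx))
                 - (f (x + (kk Mm i - 1) * dx) - P ((kk Mm i - 1) * dx)))) / dx"
proof -
  let ?n = "nat (Mm+Mp)"
  let ?G = "\<lambda>m. (\<Sum>i\<le>?n. w Mm Mp i * (kk Mm i ^ m - (kk Mm i - 1) ^ m)) / fact m"
  have H: "hhat f Mm Mp dx x - hhat f Mm Mp dx (x - dx)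
      = (\<Sum>i\<le>?n. w Mm Mp i * (f (x + kk Mm i * dx) - f (x + (kk Mm i - 1) * dx)))"
  proof -
    have "hhat f Mm Mp dx (x - dx) = (\<Sum>i\<le>?n. w Mm Mp i * f (x + (kk Mm i - 1) * dx))"
      unfolding hhat_eq[OF M dx] by (rule sum.cong) (simp_all add: algebra_simps)
    thus ?thesis unfolding hhat_eq[OF M dx, of f x] by (simp add: sum_subtractf right_diff_distrib)
  qed
  have Q1: "(\<Sum>i\<le>?n. w Mm Mp i * (P (kk Mm i * dx) - P ((kk Mm i - 1) * dx)))
      = (\<Sum>m\<le>Suc N. D m * dx ^ m * ?G m)"
  proof -
    have "(\<Sum>i\<le>?n. w Mm Mp i * (P (kk Mm i * dx) - P ((kk Mm i - 1) * dx)))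
        = (\<Sum>i\<le>?n. \<Sum>m\<le>Suc N. D m / fact m * dx ^ m * (w Mm Mp i * (kk Mm i ^ m - (kk Mm i - 1) ^ m)))"
      unfolding P_def sum_subtractf[symmetric] sum_distrib_left
    proof (rule sum.cong[OF refl], rule sum.cong[OF refl])
      fix i m
      show "w Mm Mp i * (D m / fact m * (kk Mm i * dx) ^ m - D m / fact m * ((kk Mm i - 1) * dx) ^ m) =
         D m / fact m * dx ^ m * (w Mm Mp i * (kk Mm i ^ m - (kk Mm i - 1) ^ m))"
        unfolding power_mult_distrib by (simp only: algebra_simps)
    qed
    also have "\<dots> = (\<Sum>m\<le>Suc N. D m * dx ^ m * ?G m)"
      by (subst sum.swap) (simp add: sum_distrib_left[symmetric] sum_divide_distrib[symmetric] mult_ac)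
    finally show ?thesis .
  qed
  have G0: "?G 0 = 0" by simp
  have GS: "?G (Suc k) = (if k = 0 then 1 else 0) + (if ?n + 1 \<le> k then Lambda Mm Mp k else 0)" for k
    by (rule key_identity[OF M])
  have Q2: "(\<Sum>m\<le>Suc N. D m * dx ^ m * ?G m)
      = dx * (D 1 + (\<Sum>n=?n + 1..N. Lambda Mm Mp n * dx ^ n * D (n + 1)))"
  proof -
    have "(\<Sum>m\<le>Suc N. D m * dx ^ m * ?G m) = (\<Sum>k\<le>N. D (Suc k) * dx ^ Suc k * ?G (Suc k))"
      by (subst sum.atMost_Suc_shift) (simp only: G0 mult_zero_right add_0)
    also have "\<dots> = (\<Sum>k\<le>N. dx * (if k = 0 then D 1 else 0))
                   + (\<Sum>k\<le>N. dx * (if ?n + 1 \<le> k then Lambda Mm Mp k * dx ^ k * D (k + 1) else 0))"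
      unfolding GS sum.distrib[symmetric] by (rule sum.cong) (auto simp: algebra_simps)
    also have "(\<Sum>k\<le>N. dx * (if k = 0 then D 1 else 0)) = dx * D 1"
      by (simp add: sum_distrib_left[symmetric])
    also have "(\<Sum>k\<le>N. dx * (if ?n + 1 \<le> k then Lambda Mm Mp k * dx ^ k * D (k + 1) else 0))
        = dx * (\<Sum>n=?n + 1..N. Lambda Mm Mp n * dx ^ n * D (n + 1))"
      unfolding sum_distrib_left[symmetric]
      by (rule arg_cong[where f="\<lambda>t. dx * t"], rule sum.mono_neutral_cong_right) auto
    finally show ?thesis by (simp add: algebra_simps)
  qed
  have "(\<Sum>i\<le>?n. w Mm Mp i * ((f (x + kk Mm i * dx) - P (kk Mm i * dx))
                 - (f (x + (kk Mm i - 1) * dx) - P ((kk Mm i - 1) * dx))))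
      = (hhat f Mm Mp dx x - hhat f Mm Mp dx (x - dx))
        - (\<Sum>i\<le>?n. w Mm Mp i * (P (kk Mm i * dx) - P ((kk Mm i - 1) * dx)))"
    unfolding H sum_subtractf[symmetric] by (rule sum.cong) (simp_all add: algebra_simps)
  also have "\<dots> = (hhat f Mm Mp dx x - hhat f Mm Mp dx (x - dx))
       - dx * (D 1 + (\<Sum>n=?n + 1..N. Lambda Mm Mp n * dx ^ n * D (n + 1)))"
    unfolding Q1 Q2 ..
  finally show ?thesis using dx by (simp add: field_simps)
qed

lemma kk_bound:
  assumes "i \<le> nat (Mm+Mp)" "Mm + Mp \<ge> 0"
  shows "\<bar>kk Mm i\<bar> \<le> real_of_int (\<bar>Mm\<bar> + \<bar>Mp\<bar>) + 1" "\<bar>kk Mm i - 1\<bar> \<le> real_of_int (\<bar>Mm\<bar> + \<bar>Mp\<bar>) + 1"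
proof -
  have "int i \<le> Mm + Mp" using assms by linarith
  hence "\<bar>int i - Mm\<bar> \<le> \<bar>Mm\<bar> + \<bar>Mp\<bar>" by linarith
  hence "\<bar>kk Mm i\<bar> \<le> real_of_int (\<bar>Mm\<bar> + \<bar>Mp\<bar>)" unfolding kk_def by linarith
  thus "\<bar>kk Mm i\<bar> \<le> real_of_int (\<bar>Mm\<bar> + \<bar>Mp\<bar>) + 1" "\<bar>kk Mm i - 1\<bar> \<le> real_of_int (\<bar>Mm\<bar> + \<bar>Mp\<bar>) + 1"
    by linarith+
qed

theorem corollary3:
  fixes f :: "real \<Rightarrow> real" and h :: "real \<Rightarrow> real \<Rightarrow> real"
    and Mm Mp :: int and N :: nat and x \<delta> :: real and U :: "real set"
  assumes M_nonneg: "Mm + Mp \<ge> 0"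
    and N_ge: "N \<ge> nat (Mm + Mp) + 1"
    and U: "open U" "x \<in> U"
    and f_smooth: "Ck_on (N + 2) f U"
    and \<delta>: "\<delta> > 0"
    and recon: "\<forall>dx\<in>{0<..<\<delta>}. Ck_on (N + 2) (h dx) U \<and>
        (\<forall>y. {y - dx / 2 .. y + dx / 2} \<subseteq> U \<longrightarrow>
             f y = 1 / dx * integral {y - dx / 2 .. y + dx / 2} (h dx))"
  shows "(\<lambda>dx. (hhat f Mm Mp dx x - hhat f Mm Mp dx (x - dx)) / dx - deriv f x
            - (\<Sum>n=nat (Mm + Mp) + 1..N. Lambda Mm Mp n * dx ^ n * (deriv ^^ (n + 1)) f x))
          \<in> O[at_right 0](\<lambda>dx. dx ^ (N + 1))
     \<and> (\<lambda>dx. (hhat f Mm Mp dx x - hhat f Mm Mp dx (x - dx)) / dx - deriv f x)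
          \<in> O[at_right 0](\<lambda>dx. dx ^ (nat (Mm + Mp) + 1))"
proof -
  let ?n = "nat (Mm + Mp)"
  define D where "D = (\<lambda>k. (deriv ^^ k) f)"
  define P where "P = (\<lambda>h. \<Sum>m\<le>Suc N. D m x / fact m * h ^ m)"
  have CK1: "\<forall>m<N+2. \<forall>y\<in>U. D m field_differentiable (at y)" and CK2: "continuous_on U (D (N+2))"
    using f_smooth unfolding Ck_on_def D_def by auto
  obtain r where r: "r > 0" "cball x r \<subseteq> U" using U open_contains_cball by blast
  have DER: "\<forall>m t. m < N + 2 \<and> x - r \<le> t \<and> t \<le> x + r \<longrightarrow> DERIV (D m) t :> D (Suc m) t"
  proof (intro allI impI)
    fix m t assume a: "m < N + 2 \<and> x - r \<le> t \<and> t \<le> x + r"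
    hence "t \<in> cball x r" by (auto simp: dist_real_def)
    hence "t \<in> U" using r by auto
    hence "D m field_differentiable (at t)" using CK1 a by auto
    hence "DERIV (D m) t :> deriv (D m) t" by (simp add: DERIV_deriv_iff_field_differentiable)
    thus "DERIV (D m) t :> D (Suc m) t" by (simp add: D_def)
  qed
  have "compact (D (N+2) ` cball x r)"
    by (rule compact_continuous_image[OF continuous_on_subset[OF CK2 r(2)]]) simp
  then obtain B where B: "\<forall>t\<in>cball x r. \<bar>D (N+2) t\<bar> \<le> B"
    using compact_imp_bounded bounded_iff by (metis image_eqI real_norm_def)
  have B0: "B \<ge> 0" using B r by (metis abs_ge_zero centre_in_cball less_imp_le order.trans)
  have TAY: "\<bar>f (x + s) - P s\<bar> \<le> B / fact (N+2) * \<bar>s\<bar> ^ (N+2)" if s: "\<bar>s\<bar> \<le> r" for s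
  proof (cases "s = 0")
    case True
    have "P 0 = D 0 x" unfolding P_def by (simp add: sum.atMost_Suc_shift)
    thus ?thesis using True by (simp add: D_def)
  next
    case False
    have D0: "D 0 = f" by (simp add: D_def)
    have "\<exists>t. (if x + s < x then x + s < t \<and> t < x else x < t \<and> t < x + s) \<and>
      f (x + s) = (\<Sum>m<N+2. D m x / fact m * (x + s - x) ^ m) + D (N+2) t / fact (N+2) * (x + s - x) ^ (N+2)"
      by (rule Taylor[OF _ D0 DER]) (use s False r(1) in auto)
    then obtain t where t: "(if x + s < x then x + s < t \<and> t < x else x < t \<and> t < x + s)"
      "f (x + s) = (\<Sum>m<N+2. D m x / fact m * (x + s - x) ^ m) + D (N+2) t / fact (N+2) * (x + s - x) ^ (N+2)"
      by blast
    have "t \<in> cball x r" using t(1) s by (auto simp: dist_real_def split: if_splits)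
    hence Bt: "\<bar>D (N+2) t\<bar> \<le> B" using B by auto
    have "(\<Sum>m<N+2. D m x / fact m * (x + s - x) ^ m) = P s"
      unfolding P_def by (simp add: lessThan_Suc_atMost[symmetric])
    hence "\<bar>f (x + s) - P s\<bar> = \<bar>D (N+2) t\<bar> / fact (N+2) * \<bar>s\<bar> ^ (N+2)"
      using t(2) by (simp add: abs_mult power_abs)
    also have "\<dots> \<le> B / fact (N+2) * \<bar>s\<bar> ^ (N+2)"
      using Bt by (intro mult_right_mono divide_right_mono) auto
    finally show ?thesis .
  qed
  define Kb where "Kb = real_of_int (\<bar>Mm\<bar> + \<bar>Mp\<bar>) + 1"
  have Kb: "Kb \<ge> 1" unfolding Kb_def by simp
  define C where "C = (\<Sum>i\<le>?n. \<bar>w Mm Mp i\<bar>) * (2 * (B / fact (N+2) * Kb ^ (N+2)))"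
  have C0: "C \<ge> 0" unfolding C_def using B0 Kb by (intro mult_nonneg_nonneg sum_nonneg) auto
  define E1 where "E1 = (\<lambda>dx. (hhat f Mm Mp dx x - hhat f Mm Mp dx (x - dx)) / dx - deriv f x
            - (\<Sum>n=nat (Mm + Mp) + 1..N. Lambda Mm Mp n * dx ^ n * (deriv ^^ (n + 1)) f x))"
  have E1b: "\<bar>E1 dx\<bar> \<le> C * dx ^ (N+1)" if dx: "0 < dx" "dx < r / Kb" for dx
  proof -
    have dxK: "Kb * dx \<le> r" using dx Kb by (simp add: field_simps)
    let ?e = "\<lambda>i. (f (x + kk Mm i * dx) - P (kk Mm i * dx)) - (f (x + (kk Mm i - 1) * dx) - P ((kk Mm i - 1) * dx))"
    have E1e: "E1 dx = (\<Sum>i\<le>?n. w Mm Mp i * ?e i) / dx"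
      unfolding E1_def P_def using expand[OF M_nonneg dx(1), of f x "\<lambda>k. D k x" N]
      by (simp add: D_def)
    have eb: "\<bar>?e i\<bar> \<le> 2 * (B / fact (N+2) * Kb ^ (N+2)) * dx ^ (N+2)" if i: "i \<le> ?n" for i
    proof -
      have b1: "\<bar>kk Mm i * dx\<bar> \<le> Kb * dx" "\<bar>(kk Mm i - 1) * dx\<bar> \<le> Kb * dx"
        using kk_bound[OF i M_nonneg] dx by (auto simp: abs_mult Kb_def intro: mult_right_mono)
      have p: "\<bar>a\<bar> ^ (N+2) \<le> Kb ^ (N+2) * dx ^ (N+2)" if "\<bar>a\<bar> \<le> Kb * dx" for a
        using power_mono[OF that abs_ge_zero, of "N+2"] by (simp only: power_mult_distrib)
      have c: "B / fact (N+2) \<ge> 0" using B0 by simp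
      have t1: "\<bar>f (x + kk Mm i * dx) - P (kk Mm i * dx)\<bar> \<le> B / fact (N+2) * (Kb ^ (N+2) * dx ^ (N+2))"
        using TAY[of "kk Mm i * dx"] b1(1) dxK p[OF b1(1)] mult_left_mono[OF p[OF b1(1)] c] by linarith
      have t2: "\<bar>f (x + (kk Mm i - 1) * dx) - P ((kk Mm i - 1) * dx)\<bar> \<le> B / fact (N+2) * (Kb ^ (N+2) * dx ^ (N+2))"
        using TAY[of "(kk Mm i - 1) * dx"] b1(2) dxK mult_left_mono[OF p[OF b1(2)] c] by linarith
      have "2 * (B / fact (N+2) * Kb ^ (N+2)) * dx ^ (N+2) = B / fact (N+2) * (Kb ^ (N+2) * dx ^ (N+2)) + B / fact (N+2) * (Kb ^ (N+2) * dx ^ (N+2))"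
        by (simp add: algebra_simps)
      thus ?thesis using t1 t2 abs_triangle_ineq4[of "f (x + kk Mm i * dx) - P (kk Mm i * dx)" "f (x + (kk Mm i - 1) * dx) - P ((kk Mm i - 1) * dx)"]
        by linarith
    qed
    have "\<bar>\<Sum>i\<le>?n. w Mm Mp i * ?e i\<bar> \<le> (\<Sum>i\<le>?n. \<bar>w Mm Mp i\<bar> * (2 * (B / fact (N+2) * Kb ^ (N+2)) * dx ^ (N+2)))"
    proof (rule order.trans[OF sum_abs], rule sum_mono)
      fix i assume "i \<in> {..?n}"
      thus "\<bar>w Mm Mp i * ?e i\<bar> \<le> \<bar>w Mm Mp i\<bar> * (2 * (B / fact (N+2) * Kb ^ (N+2)) * dx ^ (N+2))"
        unfolding abs_mult by (intro mult_left_mono[OF eb]) auto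
    qed
    also have "\<dots> = C * dx ^ (N+2)" unfolding C_def sum_distrib_right[symmetric] by (simp add: mult_ac)
    finally have S: "\<bar>\<Sum>i\<le>?n. w Mm Mp i * ?e i\<bar> \<le> C * dx ^ (N+2)" .
    have "\<bar>E1 dx\<bar> = \<bar>\<Sum>i\<le>?n. w Mm Mp i * ?e i\<bar> / dx" unfolding E1e using dx by simp
    also have "\<dots> \<le> C * dx ^ (N+2) / dx" using S dx by (intro divide_right_mono) auto
    also have "\<dots> = C * dx ^ (N+1)" using dx by simp
    finally show ?thesis .
  qed
  have rK: "r / Kb > 0" using r Kb by simp
  have part1: "E1 \<in> O[at_right 0](\<lambda>dx. dx ^ (N + 1))"
  proof (rule bigoI[where c=C])
    show "\<forall>\<^sub>F dx in at_right 0. norm (E1 dx) \<le> C * norm (dx ^ (N + 1))"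
      unfolding eventually_at_right_field using rK E1b by (intro exI[of _ "r / Kb"]) auto
  qed
  define L where "L = (\<Sum>n=?n + 1..N. \<bar>Lambda Mm Mp n * (deriv ^^ (n + 1)) f x\<bar>)"
  have part2: "(\<lambda>dx. (hhat f Mm Mp dx x - hhat f Mm Mp dx (x - dx)) / dx - deriv f x)
          \<in> O[at_right 0](\<lambda>dx. dx ^ (?n + 1))"
  proof (rule bigoI[where c="C + L"])
    have "\<bar>(hhat f Mm Mp dx x - hhat f Mm Mp dx (x - dx)) / dx - deriv f x\<bar> \<le> (C + L) * dx ^ (?n + 1)"
      if dx: "0 < dx" "dx < min (r / Kb) 1" for dx
    proof -
      have dx1: "dx \<le> 1" using dx by simp
      have "(hhat f Mm Mp dx x - hhat f Mm Mp dx (x - dx)) / dx - deriv f x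
          = E1 dx + (\<Sum>n=?n + 1..N. Lambda Mm Mp n * dx ^ n * (deriv ^^ (n + 1)) f x)"
        unfolding E1_def by simp
      moreover have "\<bar>E1 dx\<bar> \<le> C * dx ^ (?n + 1)"
      proof -
        have "dx ^ (N + 1) \<le> dx ^ (?n + 1)" using dx dx1 N_ge by (intro power_decreasing) auto
        thus ?thesis using E1b[of dx] dx C0 by (meson min_less_iff_conj mult_left_mono order.trans)
      qed
      moreover have "\<bar>\<Sum>n=?n + 1..N. Lambda Mm Mp n * dx ^ n * (deriv ^^ (n + 1)) f x\<bar> \<le> L * dx ^ (?n + 1)"
      proof -
        have "\<bar>\<Sum>n=?n + 1..N. Lambda Mm Mp n * dx ^ n * (deriv ^^ (n + 1)) f x\<bar>
            \<le> (\<Sum>n=?n + 1..N. \<bar>Lambda Mm Mp n * (deriv ^^ (n + 1)) f x\<bar> * dx ^ (?n + 1))"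
        proof (rule order.trans[OF sum_abs], rule sum_mono)
          fix n assume "n \<in> {?n + 1..N}"
          hence "dx ^ n \<le> dx ^ (?n + 1)" using dx dx1 by (intro power_decreasing) auto
          moreover have e: "\<bar>Lambda Mm Mp n * dx ^ n * (deriv ^^ (n + 1)) f x\<bar> = \<bar>Lambda Mm Mp n * (deriv ^^ (n + 1)) f x\<bar> * dx ^ n"
            using dx by (simp add: abs_mult mult_ac)
          ultimately show "\<bar>Lambda Mm Mp n * dx ^ n * (deriv ^^ (n + 1)) f x\<bar> \<le> \<bar>Lambda Mm Mp n * (deriv ^^ (n + 1)) f x\<bar> * dx ^ (?n + 1)"
            unfolding e by (intro mult_left_mono) auto
        qed
        thus ?thesis unfolding L_def by (simp add: sum_distrib_right)
      qed
      ultimately show ?thesis by (simp add: algebra_simps) (smt (verit) abs_triangle_ineq)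
    qed
    moreover have "min (r / Kb) 1 > 0" using rK by simp
    ultimately show "\<forall>\<^sub>F dx in at_right 0. norm ((hhat f Mm Mp dx x - hhat f Mm Mp dx (x - dx)) / dx - deriv f x)
        \<le> (C + L) * norm (dx ^ (?n + 1))"
      unfolding eventually_at_right_field by (intro exI[of _ "min (r / Kb) 1"]) auto
  qed
  show ?thesis using part1 part2 unfolding E1_def by blast
qed

end
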